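(* Let $n$ be a positive integer, $g=3n+1$, and let $G=\{\ell_1<\dots<\ell_g\}$ be a symmetric pure $(2n)$-sparse gapset of genus $g$ with multiplicity $m$. Then $G$ has depth $4$, its canonical partition is $G=G_0\cup G_1\cup G_2\cup G_3$ with $G_3=\{\ell_g\}$ and $G_2=\{\ell_{g-1}\}$, and moreover $\ell_{g-1}=2m+1$, $\ell_g=3m+1$, $\#G_1=n$, and $\alpha=g-1$, where $\alpha=\max\{i:\ell_{i+1}-\ell_i=2n\}$.
   Context: A gapset is a finite set $G\subset\mathbb{N}=\{1,2,\dots\}$ such that whenever $z\in G$ and $z=x+y$ with $x,y\in\mathbb{N}$, then $x\in G$ or $y\in G$; its genus is $g=\#G$. Multiplicity $m(G)=\min\{s\in\mathbb{N}:s\notin G\}$; conductor $c(G)=\min\{s\in\mathbb{N}: s+t\notin G\ \forall t\in\mathbb{N}_0\}$; Frobenius number $F(G)=c(G)-1=\ell_g$; depth $q=\lceil c(G)/m(G)\rceil$. The canonical partition is $G=G_0\cup\dots\cup G_{q-1}$ with $G_i=G\cap[im+1,(i+1)m-1]$ (so $G_0=[1,m-1]$). $G$ is symmetric if $F(G)=2g-1$. $G$ is pure $\kappa$-sparse if $\ell_{i+1}-\ell_i\le\kappa$ for all $i$ with equality for some $i$. *)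

theory Defs
  imports Complex_Main
begin

definition gapset :: "nat set \<Rightarrow> bool" where
  "gapset G \<longleftrightarrow> finite G \<and> 0 \<notin> G \<and>
     (\<forall>z\<in>G. \<forall>x y. 0 < x \<and> 0 < y \<and> z = x + y \<longrightarrow> x \<in> G \<or> y \<in> G)"

definition genus :: "nat set \<Rightarrow> nat" where
  "genus G = card G"

text \<open>The i-th smallest element of G, 1-indexed: G = {ell G 1 < ... < ell G g}.\<close>
definition ell :: "nat set \<Rightarrow> nat \<Rightarrow> nat" where
  "ell G i = sorted_list_of_set G ! (i - 1)"

definition multiplicity :: "nat set \<Rightarrow> nat" where
  "multiplicity G = (LEAST s. 0 < s \<and> s \<notin> G)"

definition conductor :: "nat set \<Rightarrow> nat" where
  "conductor G = (LEAST s. 0 < s \<and> (\<forall>t. s + t \<notin> G))"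

definition frobenius :: "nat set \<Rightarrow> int" where
  "frobenius G = int (conductor G) - 1"

definition depth :: "nat set \<Rightarrow> int" where
  "depth G = \<lceil>real (conductor G) / real (multiplicity G)\<rceil>"

definition cpart :: "nat set \<Rightarrow> nat \<Rightarrow> nat set" where
  "cpart G i = G \<inter> {i * multiplicity G + 1 .. (i + 1) * multiplicity G - 1}"

definition symmetric_gapset :: "nat set \<Rightarrow> bool" where
  "symmetric_gapset G \<longleftrightarrow> frobenius G = 2 * int (genus G) - 1"

definition pure_sparse :: "nat \<Rightarrow> nat set \<Rightarrow> bool" where
  "pure_sparse \<kappa> G \<longleftrightarrow>
     (\<forall>i. 1 \<le> i \<and> i < genus G \<longrightarrow> ell G (i + 1) - ell G i \<le> \<kappa>) \<and>
     (\<exists>i. 1 \<le> i \<and> i < genus G \<and> ell G (i + 1) - ell G i = \<kappa>)"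

definition alpha :: "nat \<Rightarrow> nat set \<Rightarrow> nat" where
  "alpha \<kappa> G = Max {i. 1 \<le> i \<and> i < genus G \<and> ell G (i + 1) - ell G i = \<kappa>}"

end

theory Submission
  imports Defs
begin

lemma ell_nth: "ell G (Suc j) = sorted_list_of_set G ! j"
  by (simp add: ell_def)

lemma ell_in:
  assumes "finite G" "1 \<le> i" "i \<le> card G"
  shows "ell G i \<in> G"
proof -
  have "sorted_list_of_set G ! (i - 1) \<in> set (sorted_list_of_set G)"
    using assms by (intro nth_mem) simp
  then show ?thesis using assms by (simp add: ell_def)
qed

lemma ell_less:
  assumes "finite G" "1 \<le> i" "i < j" "j \<le> card G"
  shows "ell G i < ell G j"
proof -
  have sw: "sorted_wrt (<) (sorted_list_of_set G)" by simp
  have "sorted_list_of_set G ! (i - 1) < sorted_list_of_set G ! (j - 1)"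
    using sorted_wrt_nth_less[OF sw, of "i-1" "j-1"] assms by simp
  then show ?thesis by (simp add: ell_def)
qed

lemma ell_le:
  assumes "finite G" "1 \<le> i" "i \<le> j" "j \<le> card G"
  shows "ell G i \<le> ell G j"
  using ell_less[OF assms(1,2) _ assms(4)] assms(3) by (cases "i = j") auto

lemma ell_surj:
  assumes "finite G" "x \<in> G"
  shows "\<exists>i. 1 \<le> i \<and> i \<le> card G \<and> ell G i = x"
proof -
  have "x \<in> set (sorted_list_of_set G)" using assms by simp
  then obtain j where "j < length (sorted_list_of_set G)" "sorted_list_of_set G ! j = x"
    by (auto simp: in_set_conv_nth)
  then show ?thesis using assms by (intro exI[of _ "Suc j"]) (simp add: ell_def)
qed

lemma ell_between:
  assumes "finite G" "1 \<le> i" "i < card G" "ell G i < y" "y < ell G (i+1)"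
  shows "y \<notin> G"
proof
  assume "y \<in> G"
  then obtain j where j: "1 \<le> j" "j \<le> card G" "ell G j = y" using ell_surj assms(1) by blast
  show False
  proof (cases "j \<le> i")
    case True
    then show ?thesis using ell_le[OF assms(1) j(1) True] assms j by linarith
  next
    case False
    then show ?thesis using ell_le[OF assms(1) _ _ j(2), of "i+1"] assms j by linarith
  qed
qed

lemma ell_last:
  assumes "finite G" "G \<noteq> {}"
  shows "ell G (card G) = Max G"
proof -
  have "Max G \<in> G" using assms by simp
  then obtain j where j: "1 \<le> j" "j \<le> card G" "ell G j = Max G" using ell_surj assms(1) by blast
  have "ell G (card G) \<in> G" using ell_in[OF assms(1), of "card G"] j by simp
  then have "ell G (card G) \<le> Max G" using assms by simp
  moreover have "ell G j \<le> ell G (card G)" using ell_le[OF assms(1) j(1) j(2)] by simp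
  ultimately show ?thesis using j by simp
qed

theorem mainTheorem9:
  fixes n :: nat and G :: "nat set"
  assumes "0 < n"
    and "gapset G"
    and "genus G = 3 * n + 1"
    and "symmetric_gapset G"
    and "pure_sparse (2 * n) G"
  shows "depth G = 4
    \<and> G = cpart G 0 \<union> cpart G 1 \<union> cpart G 2 \<union> cpart G 3
    \<and> cpart G 3 = {ell G (genus G)}
    \<and> cpart G 2 = {ell G (genus G - 1)}
    \<and> ell G (genus G - 1) = 2 * multiplicity G + 1
    \<and> ell G (genus G) = 3 * multiplicity G + 1
    \<and> card (cpart G 1) = n
    \<and> alpha (2 * n) G = genus G - 1"
proof -
  have fin: "finite G" and G0: "0 \<notin> G"
    and gp: "\<And>z x y. z \<in> G \<Longrightarrow> 0 < x \<Longrightarrow> 0 < y \<Longrightarrow> z = x + y \<Longrightarrow> x \<in> G \<or> y \<in> G"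
    using assms(2) unfolding gapset_def by blast+
  have cardG: "card G = 3*n+1" using assms(3) by (simp add: genus_def)
  have Gne: "G \<noteq> {}" using cardG by auto
  define F where "F = Max G"
  have FG: "F \<in> G" using fin Gne F_def by simp
  have Fmax: "\<And>x. x \<in> G \<Longrightarrow> x \<le> F" using fin F_def by simp
  have cond: "conductor G = F + 1"
    unfolding conductor_def
  proof (rule Least_equality)
    show "0 < F + 1 \<and> (\<forall>t. F + 1 + t \<notin> G)" using Fmax by (auto dest!: Fmax)
  next
    fix s assume s: "0 < s \<and> (\<forall>t. s + t \<notin> G)"
    show "F + 1 \<le> s"
    proof (rule ccontr)
      assume "\<not> F + 1 \<le> s"
      then have "s + (F - s) = F" by simp
      then show False using s FG by metis
    qed
  qed
  have F_eq: "F = 6*n+1"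
    using assms(4) cond cardG by (simp add: symmetric_gapset_def frobenius_def genus_def)
  have Gsub: "G \<subseteq> {1..F}" using Fmax G0 by (auto simp: Suc_le_eq) (metis gr0I)
  have sym1: "\<And>x. x \<le> F \<Longrightarrow> x \<notin> G \<Longrightarrow> F - x \<in> G"
  proof -
    fix x assume x: "x \<le> F" "x \<notin> G"
    show "F - x \<in> G"
    proof (cases "x = 0")
      case True then show ?thesis using FG by simp
    next
      case False
      then have "x < F" using x FG by (cases "x = F") auto
      then show ?thesis using gp[OF FG, of x "F - x"] x False by auto
    qed
  qed
  have sym2: "\<And>x. x \<in> G \<Longrightarrow> F - x \<notin> G"
  proof -
    fix x assume xG: "x \<in> G"
    define C where "C = {0..F} - G"
    have "G \<subseteq> {0..F}" using Gsub by auto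
    then have cC: "card C = F + 1 - card G" unfolding C_def
      using fin by (simp add: card_Diff_subset)
    then have cC2: "card C = card G" using F_eq cardG by simp
    have inj: "inj_on (\<lambda>x. F - x) C" unfolding C_def by (auto simp: inj_on_def)
    have sub: "(\<lambda>x. F - x) ` C \<subseteq> G" unfolding C_def using sym1 by auto
    have "card ((\<lambda>x. F - x) ` C) = card G" using card_image[OF inj] cC2 by simp
    then have "(\<lambda>x. F - x) ` C = G" using card_subset_eq[OF fin sub] by simp
    then obtain y where y: "y \<in> C" "x = F - y" using xG by auto
    then have "y \<le> F" "y \<notin> G" unfolding C_def by auto
    then show "F - x \<notin> G" using y by simp
  qed
  define m where "m = multiplicity G"
  have exm: "\<exists>s. 0 < s \<and> s \<notin> G" using Fmax[of "F+1"] by auto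
  have m_pos: "0 < m" and m_notin: "m \<notin> G"
    using LeastI_ex[OF exm] unfolding m_def multiplicity_def by auto
  have below_m: "\<And>s. 0 < s \<Longrightarrow> s < m \<Longrightarrow> s \<in> G"
    using not_less_Least unfolding m_def multiplicity_def by blast
  have mult: "\<And>k. 0 < k \<Longrightarrow> k * m \<notin> G"
  proof -
    fix k :: nat assume "0 < k"
    then show "k * m \<notin> G"
    proof (induction k)
      case 0 then show ?case by simp
    next
      case (Suc k)
      show ?case
      proof (cases "k = 0")
        case True then show ?thesis using m_notin by simp
      next
        case False
        then have "k * m \<notin> G" using Suc by simp
        moreover have "Suc k * m = k * m + m" by simp
        ultimately show ?thesis using gp[of "Suc k * m" "k*m" m] m_notin m_pos False by auto
      qed
    qed
  qed
  have mF: "m \<le> F"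
  proof (rule ccontr)
    assume "\<not> m \<le> F"
    then have "{1..F} \<subseteq> G" using below_m by auto
    then have "card {1..F} \<le> card G" using fin by (meson card_mono)
    then show False using F_eq cardG assms(1) by simp
  qed
  have FmG: "F - m \<in> G" using sym1 mF m_notin by simp
  have top2: "\<And>x. x \<in> G \<Longrightarrow> x = F \<or> x \<le> F - m"
  proof -
    fix x assume xG: "x \<in> G"
    show "x = F \<or> x \<le> F - m"
    proof (rule ccontr)
      assume "\<not> (x = F \<or> x \<le> F - m)"
      then have "0 < F - x" "F - x < m" using Fmax[OF xG] mF by auto
      then show False using below_m sym2 xG by blast
    qed
  qed
  have ellg: "ell G (3*n+1) = F" using ell_last[OF fin Gne] cardG F_def by simp
  define b where "b = ell G (3*n)"
  have bG: "b \<in> G" unfolding b_def using ell_in[OF fin] cardG assms(1) by simp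
  have bF: "b < F" unfolding b_def using ell_less[OF fin, of "3*n" "3*n+1"] cardG assms(1) ellg by simp
  have b_eq: "b = F - m"
  proof -
    obtain j where j: "1 \<le> j" "j \<le> card G" "ell G j = F - m" using ell_surj[OF fin FmG] by blast
    have "j \<noteq> 3*n+1" proof assume "j = 3*n+1" then have "F - m = F" using j ellg by simp then show False using m_pos F_eq by simp qed
    then have "j \<le> 3*n" using j cardG by simp
    then have "F - m \<le> b" unfolding b_def using ell_le[OF fin j(1)] j cardG by simp
    moreover have "b \<le> F - m" using top2[OF bG] bF by simp
    ultimately show ?thesis by simp
  qed
  have ps1: "\<And>i. 1 \<le> i \<Longrightarrow> i < 3*n+1 \<Longrightarrow> ell G (i + 1) - ell G i \<le> 2*n"
    using assms(5) cardG unfolding pure_sparse_def genus_def by auto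
  obtain i where i: "1 \<le> i" "i < 3*n+1" "ell G (i + 1) - ell G i = 2*n"
    using assms(5) cardG unfolding pure_sparse_def genus_def by auto
  have m_le: "m \<le> 2*n" using ps1[of "3*n"] assms(1) ellg b_eq mF unfolding b_def by simp
  have m_ge: "2*n \<le> m"
  proof (rule ccontr)
    assume mlt: "\<not> 2*n \<le> m"
    define a where "a = ell G i"
    have a1: "ell G (i+1) = a + 2*n" using i a_def by simp
    have a1G: "a + 2*n \<le> F" using a1 ell_in[OF fin, of "i+1"] i cardG Fmax by fastforce
    have gapnot: "\<And>y. a < y \<Longrightarrow> y < a + 2*n \<Longrightarrow> y \<notin> G"
      using ell_between[OF fin i(1)] i cardG a1 a_def by simp
    define lo where "lo = F - (a + 2*n) + 1"
    define k where "k = (lo + m - 1) div m"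
    have lo1: "1 \<le> lo" unfolding lo_def by simp
    define r where "r = (lo + m - 1) mod m"
    have kr: "k * m + r = lo + m - 1" unfolding k_def r_def by simp
    have rm: "r < m" unfolding r_def using m_pos by simp
    have kpos: "0 < k"
    proof (rule ccontr)
      assume "\<not> 0 < k" then have "k = 0" by simp
      then show False using kr rm lo1 by simp
    qed
    define z where "z = F - k * m"
    have z1: "a < z" "z < a + 2*n" "z \<le> F" using kr rm lo1 mlt a1G unfolding z_def lo_def by auto
    have "z \<notin> G" using gapnot z1 by simp
    then have "F - z \<in> G" using sym1 z1 by simp
    moreover have "F - z = k * m" using kr rm lo1 mlt a1G unfolding z_def lo_def by auto
    ultimately show False using mult kpos by simp
  qed
  have m2n: "m = 2*n" using m_le m_ge by simp
  have mm: "multiplicity G = 2*n" using m2n m_def by simp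
  have gen: "genus G = 3*n+1" using cardG by (simp add: genus_def)
  have ellg1: "ell G (3*n) = 4*n+1" using b_eq b_def m2n F_eq by simp
  have dep: "depth G = 4"
  proof -
    have "depth G = \<lceil>real (6*n+2) / real (2*n)\<rceil>"
      unfolding depth_def cond F_eq mm by simp
    also have "\<dots> = 4"
    proof (rule ceiling_unique)
      have n1: "real n \<ge> 1" using assms(1) by simp
      show "real (6 * n + 2) / real (2 * n) \<le> real_of_int 4"
        using n1 by (simp add: divide_simps)
      show "real_of_int 4 - 1 < real (6 * n + 2) / real (2 * n)"
        using n1 by (simp add: divide_simps)
    qed
    finally show ?thesis .
  qed
  have cp0: "cpart G 0 = {1..2*n-1}"
    unfolding cpart_def mm using below_m m2n by auto
  have cp1: "cpart G 1 = G \<inter> {2*n+1..4*n-1}"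
    unfolding cpart_def mm by simp
  have cp2: "cpart G 2 = {4*n+1}"
  proof -
    have "cpart G 2 = G \<inter> {4*n+1..6*n-1}" unfolding cpart_def mm by simp
    also have "\<dots> = {4*n+1}"
    proof
      show "G \<inter> {4*n+1..6*n-1} \<subseteq> {4*n+1}"
      proof
        fix x assume x: "x \<in> G \<inter> {4*n+1..6*n-1}"
        then have "x = F \<or> x \<le> F - m" using top2 by simp
        then show "x \<in> {4*n+1}" using x F_eq m2n by auto
      qed
      show "{4*n+1} \<subseteq> G \<inter> {4*n+1..6*n-1}" using FmG F_eq m2n assms(1) by auto
    qed
    finally show ?thesis .
  qed
  have cp3: "cpart G 3 = {6*n+1}"
    unfolding cpart_def mm using FG F_eq Fmax assms(1) by fastforce
  have m2: "2 * m \<notin> G" and m3: "3*m \<notin> G" using mult[of 2] mult[of 3] by auto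
  have un: "G = cpart G 0 \<union> cpart G 1 \<union> cpart G 2 \<union> cpart G 3"
  proof
    show "cpart G 0 \<union> cpart G 1 \<union> cpart G 2 \<union> cpart G 3 \<subseteq> G"
      unfolding cpart_def by auto
    show "G \<subseteq> cpart G 0 \<union> cpart G 1 \<union> cpart G 2 \<union> cpart G 3"
    proof
      fix x assume x: "x \<in> G"
      have "1 \<le> x" "x \<le> 6*n+1" using x Gsub F_eq by auto
      moreover have "x = 6*n+1 \<or> x \<le> 4*n+1" using top2[OF x] F_eq m2n by simp
      moreover have "x \<noteq> 2*n" "x \<noteq> 4*n" "x \<noteq> 6*n" using x m_notin m2 m3 m2n by auto
      ultimately show "x \<in> cpart G 0 \<union> cpart G 1 \<union> cpart G 2 \<union> cpart G 3"
        unfolding cp1 cp2 cp3 cp0 using x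
        by (cases "x < 2*n"; cases "x < 4*n"; cases "x < 6*n") auto
    qed
  qed
  have c1: "card (cpart G 1) = n"
  proof -
    have fin1: "finite (cpart G 1)" unfolding cp1 by simp
    have "card G = card (cpart G 0 \<union> cpart G 1 \<union> cpart G 2 \<union> cpart G 3)" using un by simp
    also have "\<dots> = card ({1..2*n-1} \<union> cpart G 1 \<union> {4*n+1}) + 1"
      unfolding cp0 cp2 cp3 using fin1 by (subst card_Un_disjoint) (use assms(1) cp1 in \<open>auto simp: One_nat_def\<close>)
    also have "\<dots> = card ({1..2*n-1} \<union> cpart G 1) + 1 + 1"
      using fin1 by (subst card_Un_disjoint) (use assms(1) cp1 in \<open>auto simp: One_nat_def\<close>)
    also have "\<dots> = card {1..2*n-1} + card (cpart G 1) + 1 + 1"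
      using fin1 by (subst card_Un_disjoint) (use assms(1) cp1 in \<open>auto simp: One_nat_def\<close>)
    also have "\<dots> = (2*n-1) + card (cpart G 1) + 2" by simp
    finally show ?thesis using cardG assms(1) by simp
  qed
  have al: "alpha (2 * n) G = genus G - 1"
    unfolding alpha_def gen
  proof (rule Max_eqI)
    show "finite {i. 1 \<le> i \<and> i < 3 * n + 1 \<and> ell G (i + 1) - ell G i = 2 * n}" by simp
    show "\<And>y. y \<in> {i. 1 \<le> i \<and> i < 3 * n + 1 \<and> ell G (i + 1) - ell G i = 2 * n} \<Longrightarrow> y \<le> 3 * n + 1 - 1"
      by simp
    show "3 * n + 1 - 1 \<in> {i. 1 \<le> i \<and> i < 3 * n + 1 \<and> ell G (i + 1) - ell G i = 2 * n}"
      using ellg ellg1 F_eq assms(1) by simp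
  qed
  show ?thesis using dep un cp3 cp2 gen ellg ellg1 mm c1 al F_eq by simp
qed

end
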